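(* Let $G$ be $\hbar$-perfect and let $G'$ be obtained from $G$ by splitting one vertex $v$, i.e. adding a new vertex $v'$ adjacent to $v$ and to exactly the neighbours of $v$ in $G$. Then $G'$ is $\hbar$-perfect.
   Context: A realization of a graph $G$ on $\{1,\dots,n\}$ is a tuple $(S_1,\dots,S_n)$ of Pauli strings (tensor products of matrices from $\{I,X,Y,Z\}$) of common length with $S_i,S_j$ anticommuting iff $i\sim j$ and commuting otherwise; every graph has one. For $w\in\mathbb{R}^n_{\ge0}$, $\beta(G,w)=\sup_\rho\sum_iw_i\operatorname{tr}(\rho S_i)^2$ over density matrices $\rho$ (independent of the realization), and $\alpha(G,w)=\max\{\sum_{i\in I}w_i: I\text{ independent set of }G\}$. $G$ is $\hbar$-perfect if $\beta(G,w)=\alpha(G,w)$ for all $w\in\mathbb{R}^n_{\ge0}$. *)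

theory Defs
  imports Complex_Main "Jordan_Normal_Form.Matrix"
begin

datatype pauli = PI | PX | PY | PZ

text \<open>Entries of the single-qubit Pauli matrices (basis index False = 0, True = 1).\<close>
fun pauli_entry :: "pauli \<Rightarrow> bool \<Rightarrow> bool \<Rightarrow> complex" where
  "pauli_entry PI a b = (if a = b then 1 else 0)"
| "pauli_entry PX a b = (if a \<noteq> b then 1 else 0)"
| "pauli_entry PY a b = (if a = b then 0 else if a then \<i> else - \<i>)"
| "pauli_entry PZ a b = (if a = b then (if a then -1 else 1) else 0)"

definition qbit :: "nat \<Rightarrow> nat \<Rightarrow> bool" where
  "qbit i k = odd (i div 2 ^ k)"

text \<open>The matrix of a Pauli string s (a list of length m): the tensor product
  of the single-qubit Pauli matrices, a 2^m x 2^m complex matrix.\<close>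
definition pstring_mat :: "pauli list \<Rightarrow> complex mat" where
  "pstring_mat s = mat (2 ^ length s) (2 ^ length s)
     (\<lambda>(i, j). \<Prod>k<length s. pauli_entry (s ! k) (qbit i k) (qbit j k))"

definition simple_graph :: "nat \<Rightarrow> (nat \<Rightarrow> nat \<Rightarrow> bool) \<Rightarrow> bool" where
  "simple_graph n E \<longleftrightarrow> (\<forall>i j. E i j \<longrightarrow> E j i) \<and> (\<forall>i. \<not> E i i)
     \<and> (\<forall>i j. E i j \<longrightarrow> i \<in> {1..n} \<and> j \<in> {1..n})"

definition realization ::
  "nat \<Rightarrow> (nat \<Rightarrow> nat \<Rightarrow> bool) \<Rightarrow> nat \<Rightarrow> (nat \<Rightarrow> pauli list) \<Rightarrow> bool" where
  "realization n E m S \<longleftrightarrow>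
     (\<forall>i\<in>{1..n}. length (S i) = m) \<and>
     (\<forall>i\<in>{1..n}. \<forall>j\<in>{1..n}.
        (E i j \<longrightarrow> pstring_mat (S i) * pstring_mat (S j) = - (pstring_mat (S j) * pstring_mat (S i))) \<and>
        (\<not> E i j \<longrightarrow> pstring_mat (S i) * pstring_mat (S j) = pstring_mat (S j) * pstring_mat (S i)))"

definition mtrace :: "complex mat \<Rightarrow> complex" where
  "mtrace A = (\<Sum>i<dim_row A. A $$ (i, i))"

text \<open>Density matrix of dimension d: positive semidefinite (hence Hermitian) with trace 1.\<close>
definition density_mat :: "nat \<Rightarrow> complex mat \<Rightarrow> bool" where
  "density_mat d \<rho> \<longleftrightarrow> \<rho> \<in> carrier_mat d d \<and>
     (\<forall>v \<in> carrier_vec d. let q = conjugate v \<bullet> (\<rho> *\<^sub>v v) in Im q = 0 \<and> Re q \<ge> 0) \<and>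
     mtrace \<rho> = 1"

text \<open>beta computed with respect to a realization S of common length m.
  For a density matrix rho and Hermitian S, tr(rho S) is real.\<close>
definition beta_real ::
  "nat \<Rightarrow> nat \<Rightarrow> (nat \<Rightarrow> pauli list) \<Rightarrow> (nat \<Rightarrow> real) \<Rightarrow> real" where
  "beta_real n m S w = Sup {(\<Sum>i\<in>{1..n}. w i * (Re (mtrace (\<rho> * pstring_mat (S i))))\<^sup>2) | \<rho>.
       density_mat (2 ^ m) \<rho>}"

definition independent_set :: "nat \<Rightarrow> (nat \<Rightarrow> nat \<Rightarrow> bool) \<Rightarrow> nat set \<Rightarrow> bool" where
  "independent_set n E I \<longleftrightarrow> I \<subseteq> {1..n} \<and> (\<forall>i\<in>I. \<forall>j\<in>I. \<not> E i j)"

definition alpha :: "nat \<Rightarrow> (nat \<Rightarrow> nat \<Rightarrow> bool) \<Rightarrow> (nat \<Rightarrow> real) \<Rightarrow> real" where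
  "alpha n E w = Max {(\<Sum>i\<in>I. w i) | I. independent_set n E I}"

text \<open>hbar-perfect: beta = alpha for all nonnegative weights; since beta does not
  depend on the realization, we require it for every realization.\<close>
definition hbar_perfect :: "nat \<Rightarrow> (nat \<Rightarrow> nat \<Rightarrow> bool) \<Rightarrow> bool" where
  "hbar_perfect n E \<longleftrightarrow> (\<forall>m S w. realization n E m S \<longrightarrow> (\<forall>i\<in>{1..n}. w i \<ge> 0) \<longrightarrow>
      beta_real n m S w = alpha n E w)"

definition split_vertex :: "nat \<Rightarrow> (nat \<Rightarrow> nat \<Rightarrow> bool) \<Rightarrow> nat \<Rightarrow> nat \<Rightarrow> nat \<Rightarrow> bool" where
  "split_vertex n E v x y \<longleftrightarrow>
     E x y \<or> (x = v \<and> y = Suc n) \<or> (x = Suc n \<and> y = v)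
     \<or> (x = Suc n \<and> E v y) \<or> (y = Suc n \<and> E v x)"

end

theory Submission
  imports Defs
begin
lemma sum_pairs: "(\<Sum>l<2*N. f l) = (\<Sum>l<N. f (2*l) + f (2*l+1))" for f :: "nat \<Rightarrow> 'a::comm_monoid_add"
  by (induction N) (auto simp: algebra_simps)

lemma qbit0: "qbit i 0 = odd i" by (simp add: qbit_def)
lemma qbitS: "qbit i (Suc k) = qbit (i div 2) k"
  by (simp add: qbit_def div_mult2_eq)

lemma pstring_carrier: "pstring_mat s \<in> carrier_mat (2^length s) (2^length s)"
  by (simp add: pstring_mat_def)

lemma pstring_Cons_entry:
  assumes "i < 2 ^ Suc (length s)" "j < 2 ^ Suc (length s)"
  shows "pstring_mat (p # s) $$ (i,j) = pauli_entry p (odd i) (odd j) * pstring_mat s $$ (i div 2, j div 2)"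
proof -
  have "i div 2 < 2 ^ length s" "j div 2 < 2 ^ length s" using assms by auto
  then show ?thesis using assms
    unfolding pstring_mat_def
    by (simp only: length_Cons, subst prod.lessThan_Suc_shift) (simp add: qbit0 qbitS del: power_Suc)
qed

lemma pauli_sq: "pauli_entry p a False * pauli_entry p False c + pauli_entry p a True * pauli_entry p True c
   = (if a = c then 1 else 0)"
  by (cases p; cases a; cases c) auto

lemma pauli_cnj: "cnj (pauli_entry p a b) = pauli_entry p b a"
  by (cases p; cases a; cases b) auto

lemma pstring_sq_entry:
  "i < 2 ^ length s \<Longrightarrow> j < 2 ^ length s \<Longrightarrow>
   (\<Sum>l<2 ^ length s. pstring_mat s $$ (i,l) * pstring_mat s $$ (l,j)) = (if i = j then 1 else 0)"
proof (induction s arbitrary: i j)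
  case Nil
  then show ?case by (simp add: pstring_mat_def)
next
  case (Cons p s)
  let ?N = "2 ^ length s"
  let ?P = "pstring_mat s"
  have "(\<Sum>l<2 ^ length (p # s). pstring_mat (p # s) $$ (i,l) * pstring_mat (p # s) $$ (l,j))
     = (\<Sum>l<2 * ?N. pstring_mat (p # s) $$ (i,l) * pstring_mat (p # s) $$ (l,j))" by simp
  also have "\<dots> = (\<Sum>l<?N. (pauli_entry p (odd i) False * pauli_entry p False (odd j) + pauli_entry p (odd i) True * pauli_entry p True (odd j))
       * (?P $$ (i div 2, l) * ?P $$ (l, j div 2)))"
    unfolding sum_pairs
    apply (rule sum.cong[OF refl])
    using Cons.prems by (simp add: pstring_Cons_entry algebra_simps)
  also have "\<dots> = (if odd i = odd j then 1 else 0) * (\<Sum>l<?N. ?P $$ (i div 2, l) * ?P $$ (l, j div 2))"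
    by (simp add: pauli_sq sum_distrib_left)
  also have "\<dots> = (if i = j then 1 else 0)"
    using Cons.IH[of "i div 2" "j div 2"] Cons.prems
    apply (auto)
    by (metis div_mult_mod_eq mod2_eq_if)+
  finally show ?case .
qed

definition adj :: "complex mat \<Rightarrow> complex mat" where
  "adj A = mat (dim_col A) (dim_row A) (\<lambda>(i,j). cnj (A $$ (j,i)))"

lemma adj_dim[simp]: "dim_row (adj A) = dim_col A" "dim_col (adj A) = dim_row A"
  by (simp_all add: adj_def)
lemma adj_index[simp]: "i < dim_col A \<Longrightarrow> j < dim_row A \<Longrightarrow> adj A $$ (i,j) = cnj (A $$ (j,i))"
  unfolding adj_def by simp
lemma adj_carrier[simp]: "A \<in> carrier_mat n m \<Longrightarrow> adj A \<in> carrier_mat m n"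
  unfolding carrier_mat_def by simp

lemma pstring_dim[simp]: "dim_row (pstring_mat s) = 2 ^ length s" "dim_col (pstring_mat s) = 2 ^ length s"
  unfolding pstring_mat_def by simp_all

lemma pstring_index: "i < 2 ^ length s \<Longrightarrow> j < 2 ^ length s \<Longrightarrow>
  pstring_mat s $$ (i,j) = (\<Prod>k<length s. pauli_entry (s ! k) (qbit i k) (qbit j k))"
  unfolding pstring_mat_def by simp

lemma adj_mult: assumes A: "A \<in> carrier_mat n k" and B: "B \<in> carrier_mat k m"
  shows "adj (A * B) = adj B * adj A"
proof (rule eq_matI)
  fix i j assume ij: "i < dim_row (adj B * adj A)" "j < dim_col (adj B * adj A)"
  have d: "dim_row A = n" "dim_col A = k" "dim_row B = k" "dim_col B = m" using A B by auto
  have i: "i < m" and j: "j < n" using ij d by simp_all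
  have "adj (A * B) $$ (i,j) = cnj (\<Sum>l<k. A $$ (j,l) * B $$ (l,i))"
    using i j d by (simp add: scalar_prod_def atLeast0LessThan)
  also have "\<dots> = (\<Sum>l<k. cnj (B $$ (l,i)) * cnj (A $$ (j,l)))"
    by (simp add: mult.commute)
  also have "\<dots> = (adj B * adj A) $$ (i,j)"
    using i j d by (simp add: scalar_prod_def atLeast0LessThan)
  finally show "adj (A * B) $$ (i,j) = (adj B * adj A) $$ (i,j)" .
qed (use A B in simp_all)

lemma adj_add: assumes "A \<in> carrier_mat n m" "B \<in> carrier_mat n m"
  shows "adj (A + B) = adj A + adj B"
proof (rule eq_matI)
  fix i j assume ij: "i < dim_row (adj A + adj B)" "j < dim_col (adj A + adj B)"
  have d: "dim_row A = n" "dim_col A = m" "dim_row B = n" "dim_col B = m" using assms by auto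
  show "adj (A + B) $$ (i,j) = (adj A + adj B) $$ (i,j)" using ij d by simp
qed (use assms in simp_all)

lemma adj_smult: "adj (c \<cdot>\<^sub>m A) = cnj c \<cdot>\<^sub>m adj A"
  by (rule eq_matI) simp_all

lemma adj_one: "adj (1\<^sub>m n) = 1\<^sub>m n"
  by (rule eq_matI) simp_all

lemma pstring_adj: "adj (pstring_mat s) = pstring_mat s"
  by (rule eq_matI) (simp_all add: pstring_index pauli_cnj)

lemma pstring_sq: "pstring_mat s * pstring_mat s = 1\<^sub>m (2 ^ length s)"
proof (rule eq_matI)
  fix i j assume ij: "i < dim_row (1\<^sub>m (2 ^ length s) :: complex mat)" "j < dim_col (1\<^sub>m (2 ^ length s) :: complex mat)"
  have "(pstring_mat s * pstring_mat s) $$ (i,j) = (\<Sum>l<2 ^ length s. pstring_mat s $$ (i,l) * pstring_mat s $$ (l,j))"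
    using ij by (simp add: scalar_prod_def atLeast0LessThan)
  also have "\<dots> = 1\<^sub>m (2 ^ length s) $$ (i,j)"
    using pstring_sq_entry[of i s j] ij by simp
  finally show "(pstring_mat s * pstring_mat s) $$ (i,j) = 1\<^sub>m (2 ^ length s) $$ (i,j)" .
qed simp_all

lemma pstring_carrier': "pstring_mat s \<in> carrier_mat (2^length s) (2^length s)"
  unfolding carrier_mat_def by simp

lemma inner_adj: assumes A: "A \<in> carrier_mat d d" and x: "x \<in> carrier_vec d" and y: "y \<in> carrier_vec d"
  shows "conjugate x \<bullet> (A *\<^sub>v y) = conjugate (adj A *\<^sub>v x) \<bullet> y"
proof -
  have d: "dim_row A = d" "dim_col A = d" "dim_vec x = d" "dim_vec y = d" using A x y by auto
  have "conjugate x \<bullet> (A *\<^sub>v y) = (\<Sum>i<d. cnj (x $ i) * (\<Sum>j<d. A $$ (i,j) * y $ j))"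
    using d by (simp add: scalar_prod_def atLeast0LessThan)
  also have "\<dots> = (\<Sum>i<d. \<Sum>j<d. cnj (x $ i) * A $$ (i,j) * y $ j)"
    by (simp add: sum_distrib_left mult.assoc)
  also have "\<dots> = (\<Sum>j<d. \<Sum>i<d. cnj (x $ i) * A $$ (i,j) * y $ j)"
    by (rule sum.swap)
  also have "\<dots> = (\<Sum>j<d. (\<Sum>i<d. cnj (x $ i) * A $$ (i,j)) * y $ j)"
    by (simp add: sum_distrib_right)
  also have "\<dots> = conjugate (adj A *\<^sub>v x) \<bullet> y"
    using d by (simp add: scalar_prod_def atLeast0LessThan mult.commute)
  finally show ?thesis .
qed

lemma mtrace_comm: assumes A: "A \<in> carrier_mat d e" and B: "B \<in> carrier_mat e d"
  shows "mtrace (A * B) = mtrace (B * A)"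
proof -
  have dd: "dim_row A = d" "dim_col A = e" "dim_row B = e" "dim_col B = d" using A B by auto
  have "mtrace (A * B) = (\<Sum>i<d. \<Sum>j<e. A $$ (i,j) * B $$ (j,i))"
    using dd by (simp add: mtrace_def scalar_prod_def atLeast0LessThan)
  also have "\<dots> = (\<Sum>j<e. \<Sum>i<d. B $$ (j,i) * A $$ (i,j))"
    by (subst sum.swap) (simp add: mult.commute)
  also have "\<dots> = mtrace (B * A)"
    using dd by (simp add: mtrace_def scalar_prod_def atLeast0LessThan)
  finally show ?thesis .
qed

lemma mtrace_add: assumes "A \<in> carrier_mat d d" "B \<in> carrier_mat d d"
  shows "mtrace (A + B) = mtrace A + mtrace B"
proof -
  have dd: "dim_row A = d" "dim_col A = d" "dim_row B = d" "dim_col B = d" using assms by auto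
  show ?thesis using dd by (simp add: mtrace_def sum.distrib)
qed

lemma mtrace_smult: assumes "A \<in> carrier_mat d d" shows "mtrace (c \<cdot>\<^sub>m A) = c * mtrace A"
proof -
  have dd: "dim_row A = d" "dim_col A = d" using assms by auto
  show ?thesis using dd by (simp add: mtrace_def sum_distrib_left)
qed

lemma lc_left: fixes M Q :: "complex mat" assumes M: "M \<in> carrier_mat d d" and Q: "Q \<in> carrier_mat d d"
  shows "(a \<cdot>\<^sub>m 1\<^sub>m d + b \<cdot>\<^sub>m Q) * M = a \<cdot>\<^sub>m M + b \<cdot>\<^sub>m (Q * M)"
proof -
  have "(a \<cdot>\<^sub>m 1\<^sub>m d + b \<cdot>\<^sub>m Q) * M = (a \<cdot>\<^sub>m 1\<^sub>m d) * M + (b \<cdot>\<^sub>m Q) * M"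
    by (rule add_mult_distrib_mat[of _ d d _ M d]) (use M Q in auto)
  also have "\<dots> = a \<cdot>\<^sub>m (1\<^sub>m d * M) + b \<cdot>\<^sub>m (Q * M)"
    by (simp add: mult_smult_assoc_mat[OF one_carrier_mat M] mult_smult_assoc_mat[OF Q M])
  also have "\<dots> = a \<cdot>\<^sub>m M + b \<cdot>\<^sub>m (Q * M)" using M by (simp add: left_mult_one_mat)
  finally show ?thesis .
qed

lemma lc_right: fixes M Q :: "complex mat" assumes M: "M \<in> carrier_mat d d" and Q: "Q \<in> carrier_mat d d"
  shows "M * (a \<cdot>\<^sub>m 1\<^sub>m d + b \<cdot>\<^sub>m Q) = a \<cdot>\<^sub>m M + b \<cdot>\<^sub>m (M * Q)"
proof -
  have "M * (a \<cdot>\<^sub>m 1\<^sub>m d + b \<cdot>\<^sub>m Q) = M * (a \<cdot>\<^sub>m 1\<^sub>m d) + M * (b \<cdot>\<^sub>m Q)"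
    by (rule mult_add_distrib_mat[of _ d d]) (use M Q in auto)
  also have "\<dots> = a \<cdot>\<^sub>m (M * 1\<^sub>m d) + b \<cdot>\<^sub>m (M * Q)"
    by (simp add: mult_smult_distrib[OF M one_carrier_mat] mult_smult_distrib[OF M Q])
  also have "\<dots> = a \<cdot>\<^sub>m M + b \<cdot>\<^sub>m (M * Q)" using M by (simp add: right_mult_one_mat)
  finally show ?thesis .
qed

lemma uminus_mult_l: fixes M N :: "complex mat" assumes "M \<in> carrier_mat d d" "N \<in> carrier_mat d d"
  shows "(- M) * N = - (M * N)"
  using assms by (intro uminus_mult_left_mat) auto

lemma uminus_mult_r: fixes M N :: "complex mat" assumes "M \<in> carrier_mat d d" "N \<in> carrier_mat d d"
  shows "M * (- N) = - (M * N)"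
  using assms by (intro uminus_mult_right_mat) auto

lemma smult_uminus: "k \<cdot>\<^sub>m (- Q) = (- k) \<cdot>\<^sub>m (Q :: complex mat)"
  by (intro eq_matI) auto

lemma lc2: fixes X Y Z :: "complex mat"
  assumes X: "X \<in> carrier_mat d d" and Y: "Y \<in> carrier_mat d d" and Z: "Z \<in> carrier_mat d d"
  shows "(a \<cdot>\<^sub>m X + b \<cdot>\<^sub>m Y) * Z = a \<cdot>\<^sub>m (X * Z) + b \<cdot>\<^sub>m (Y * Z)"
proof -
  have "(a \<cdot>\<^sub>m X + b \<cdot>\<^sub>m Y) * Z = (a \<cdot>\<^sub>m X) * Z + (b \<cdot>\<^sub>m Y) * Z"
    by (rule add_mult_distrib_mat[of _ d d _ Z d]) (use X Y Z in auto)
  also have "\<dots> = a \<cdot>\<^sub>m (X * Z) + b \<cdot>\<^sub>m (Y * Z)"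
    by (simp add: mult_smult_assoc_mat[OF X Z] mult_smult_assoc_mat[OF Y Z])
  finally show ?thesis .
qed

lemma rotation:
  fixes A B :: "complex mat" and c s :: complex
  assumes A: "A \<in> carrier_mat d d" and B: "B \<in> carrier_mat d d"
    and hA: "adj A = A" and hB: "adj B = B"
    and AA: "A * A = 1\<^sub>m d" and BB: "B * B = 1\<^sub>m d" and AB: "A * B = - (B * A)"
    and cs: "c * c + s * s = 1" and cc: "cnj c = c" and sc: "cnj s = s"
  defines "U \<equiv> c \<cdot>\<^sub>m 1\<^sub>m d + s \<cdot>\<^sub>m (A * B)"
  shows "U \<in> carrier_mat d d" "adj U * U = 1\<^sub>m d"
    "adj U * A * U = (c * c - s * s) \<cdot>\<^sub>m A + (2 * c * s) \<cdot>\<^sub>m B"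
    "\<And>X. X \<in> carrier_mat d d \<Longrightarrow> X * (A * B) = (A * B) * X \<Longrightarrow> adj U * X * U = X"
proof -
  define Q where "Q = A * B"
  have Qc: "Q \<in> carrier_mat d d" unfolding Q_def using A B by simp
  have U: "U = c \<cdot>\<^sub>m 1\<^sub>m d + s \<cdot>\<^sub>m Q" unfolding U_def Q_def ..
  show Uc: "U \<in> carrier_mat d d" unfolding U using Qc by simp
  have BA: "B * A = - Q" unfolding Q_def AB by simp
  have adjQ: "adj Q = - Q" unfolding Q_def adj_mult[OF A B] hA hB BA[unfolded Q_def] ..
  have adjU: "adj U = c \<cdot>\<^sub>m 1\<^sub>m d + (- s) \<cdot>\<^sub>m Q"
    unfolding U
    by (subst adj_add[of _ d d]) (use Qc in \<open>simp_all add: adj_smult adj_one adjQ cc sc smult_uminus\<close>)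
  have AQ: "A * Q = B"
    unfolding Q_def using assoc_mult_mat[OF A A B, symmetric] AA B by simp
  have QA: "Q * A = - B"
  proof -
    have "Q * A = A * (B * A)" unfolding Q_def using A B by simp
    also have "\<dots> = - (A * Q)" unfolding BA using A Qc by (simp add: uminus_mult_r)
    finally show ?thesis using AQ by simp
  qed
  have QB: "Q * B = A"
    unfolding Q_def using assoc_mult_mat[OF A B B] BB A by simp
  have BQ: "B * Q = - A"
  proof -
    have "B * Q = (B * A) * B" unfolding Q_def using A B by simp
    also have "\<dots> = - (Q * B)" unfolding BA using B Qc by (simp add: uminus_mult_l)
    finally show ?thesis using QB by simp
  qed
  have QQ: "Q * Q = - 1\<^sub>m d"
  proof -
    have "Q * Q = (Q * A) * B" by (subst assoc_mult_mat[OF Qc A B]) (simp add: Q_def)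
    also have "\<dots> = - (B * B)" unfolding QA using B by (simp add: uminus_mult_l)
    finally show ?thesis using BB by simp
  qed
  have QU: "Q * U = c \<cdot>\<^sub>m Q + s \<cdot>\<^sub>m (- 1\<^sub>m d)"
    unfolding U lc_right[OF Qc Qc] QQ by simp
  have "adj U * U = c \<cdot>\<^sub>m U + (- s) \<cdot>\<^sub>m (Q * U)"
    unfolding adjU by (rule lc_left[OF Uc Qc])
  also have "\<dots> = 1\<^sub>m d"
  proof (rule eq_matI)
    fix i j assume ij: "i < dim_row (1\<^sub>m d :: complex mat)" "j < dim_col (1\<^sub>m d :: complex mat)"
    have ij': "i < d" "j < d" using ij by auto
    have e: "c * (c * x + s * y) - s * (c * y - s * x) = x" for x y :: complex
    proof -
      have "c * (c * x + s * y) - s * (c * y - s * x) = (c * c + s * s) * x" by (simp add: algebra_simps)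
      then show ?thesis using cs by simp
    qed
    have od: "dim_row (1\<^sub>m d :: complex mat) = d" "dim_col (1\<^sub>m d :: complex mat) = d" by simp_all
    have Qd: "dim_row Q = d" "dim_col Q = d" using Qc by auto
    show "(c \<cdot>\<^sub>m U + (- s) \<cdot>\<^sub>m (Q * U)) $$ (i, j) = 1\<^sub>m d $$ (i, j)"
      unfolding QU using ij' e
      by (simp add: U od Qd del: index_one_mat)
  qed (use Uc Qc in simp_all)
  finally show "adj U * U = 1\<^sub>m d" .
  have VA: "adj U * A = c \<cdot>\<^sub>m A + (- s) \<cdot>\<^sub>m (- B)"
    unfolding adjU lc_left[OF A Qc] QA ..
  have MQ: "(c \<cdot>\<^sub>m A + (- s) \<cdot>\<^sub>m (- B)) * Q = c \<cdot>\<^sub>m B + (- s) \<cdot>\<^sub>m A"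
    unfolding lc2[OF A uminus_carrier_mat[OF B] Qc] AQ uminus_mult_l[OF B Qc] BQ by simp
  have "adj U * A * U = c \<cdot>\<^sub>m (c \<cdot>\<^sub>m A + (- s) \<cdot>\<^sub>m (- B)) + s \<cdot>\<^sub>m (c \<cdot>\<^sub>m B + (- s) \<cdot>\<^sub>m A)"
  proof -
    have M: "c \<cdot>\<^sub>m A + (- s) \<cdot>\<^sub>m (- B) \<in> carrier_mat d d" using A B by simp
    show ?thesis unfolding VA unfolding U lc_right[OF M Qc] MQ ..
  qed
  also have "\<dots> = (c * c - s * s) \<cdot>\<^sub>m A + (2 * c * s) \<cdot>\<^sub>m B"
  proof (rule eq_matI)
    fix i j assume ij: "i < dim_row ((c * c - s * s) \<cdot>\<^sub>m A + (2 * c * s) \<cdot>\<^sub>m B)"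
      "j < dim_col ((c * c - s * s) \<cdot>\<^sub>m A + (2 * c * s) \<cdot>\<^sub>m B)"
    have e: "c * (c * x + - s * - y) + s * (c * y + - s * x) = (c * c - s * s) * x + 2 * c * s * y" for x y :: complex
      by (simp add: algebra_simps)
    show "(c \<cdot>\<^sub>m (c \<cdot>\<^sub>m A + (- s) \<cdot>\<^sub>m (- B)) + s \<cdot>\<^sub>m (c \<cdot>\<^sub>m B + (- s) \<cdot>\<^sub>m A)) $$ (i, j) =
          ((c * c - s * s) \<cdot>\<^sub>m A + (2 * c * s) \<cdot>\<^sub>m B) $$ (i, j)"
      using ij A B e[of "A $$ (i,j)" "B $$ (i,j)"] by simp
  qed (use A B in simp_all)
  finally show "adj U * A * U = (c * c - s * s) \<cdot>\<^sub>m A + (2 * c * s) \<cdot>\<^sub>m B" .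
  fix X assume X: "X \<in> carrier_mat d d" and XQ: "X * (A * B) = (A * B) * X"
  have "adj U * X = X * adj U"
    unfolding adjU lc_left[OF X Qc] lc_right[OF X Qc] using XQ unfolding Q_def by simp
  then have "adj U * X * U = X * (adj U * U)"
    using X Uc assoc_mult_mat[OF X adj_carrier[OF Uc] Uc] by simp
  also have "\<dots> = X" using \<open>adj U * U = 1\<^sub>m d\<close> X by simp
  finally show "adj U * X * U = X" .
qed

lemma density_conj:
  assumes rho: "density_mat d \<rho>" and Uc: "U \<in> carrier_mat d d" and UU: "adj U * U = 1\<^sub>m d"
  shows "density_mat d (U * \<rho> * adj U)"
proof -
  have rc: "\<rho> \<in> carrier_mat d d" using rho by (simp add: density_mat_def)
  have Vc: "adj U \<in> carrier_mat d d" using Uc by simp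
  have c: "U * \<rho> * adj U \<in> carrier_mat d d" using mult_carrier_mat[OF mult_carrier_mat[OF Uc rc] Vc] .
  have psd: "let q = conjugate x \<bullet> ((U * \<rho> * adj U) *\<^sub>v x) in Im q = 0 \<and> Re q \<ge> 0"
    if x: "x \<in> carrier_vec d" for x
  proof -
    define y where "y = adj U *\<^sub>v x"
    have y: "y \<in> carrier_vec d" unfolding y_def using Vc x by simp
    have "(U * \<rho> * adj U) *\<^sub>v x = (U * \<rho>) *\<^sub>v y"
      unfolding y_def using assoc_mult_mat_vec[OF mult_carrier_mat[OF Uc rc] Vc x] .
    also have "\<dots> = U *\<^sub>v (\<rho> *\<^sub>v y)" using assoc_mult_mat_vec[OF Uc rc y] .
    finally have "(U * \<rho> * adj U) *\<^sub>v x = U *\<^sub>v (\<rho> *\<^sub>v y)" .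
    then have "conjugate x \<bullet> ((U * \<rho> * adj U) *\<^sub>v x) = conjugate y \<bullet> (\<rho> *\<^sub>v y)"
      using inner_adj[OF Uc x, of "\<rho> *\<^sub>v y"] rc y unfolding y_def by simp
    then show ?thesis using rho y unfolding density_mat_def by simp
  qed
  have "mtrace (U * \<rho> * adj U) = mtrace (adj U * (U * \<rho>))"
    by (rule mtrace_comm[of _ d d]) (use Uc rc Vc in simp_all)
  also have "adj U * (U * \<rho>) = (adj U * U) * \<rho>"
    using assoc_mult_mat[OF Vc Uc rc] by simp
  also have "mtrace (\<dots>) = 1" using UU rc rho by (simp add: density_mat_def)
  finally have "mtrace (U * \<rho> * adj U) = 1" .
  then show ?thesis using c psd unfolding density_mat_def by blast
qed

lemma trace_conj:
  assumes rc: "\<rho> \<in> carrier_mat d d" and Uc: "U \<in> carrier_mat d d" and X: "X \<in> carrier_mat d d"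
  shows "mtrace (U * \<rho> * adj U * X) = mtrace (\<rho> * (adj U * X * U))"
proof -
  have Vc: "adj U \<in> carrier_mat d d" using Uc by simp
  have "U * \<rho> * adj U * X = U * (\<rho> * adj U * X)"
    using assoc_mult_mat[OF Uc rc Vc] assoc_mult_mat[OF Uc mult_carrier_mat[OF rc Vc] X]
      assoc_mult_mat[OF mult_carrier_mat[OF Uc rc] Vc X] assoc_mult_mat[OF rc Vc X] by simp
  then have "mtrace (U * \<rho> * adj U * X) = mtrace (U * (\<rho> * adj U * X))" by simp
  also have "\<dots> = mtrace ((\<rho> * adj U * X) * U)"
    by (rule mtrace_comm[OF Uc mult_carrier_mat[OF mult_carrier_mat[OF rc Vc] X]])
  also have "(\<rho> * adj U * X) * U = \<rho> * (adj U * X * U)"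
    using assoc_mult_mat[OF rc Vc X] assoc_mult_mat[OF rc mult_carrier_mat[OF Vc X] Uc]
      assoc_mult_mat[OF mult_carrier_mat[OF rc Vc] X Uc] assoc_mult_mat[OF Vc X Uc] by simp
  finally show ?thesis .
qed

lemma trace_lin:
  fixes a b :: real
  assumes rc: "\<rho> \<in> carrier_mat d d" and A: "A \<in> carrier_mat d d" and B: "B \<in> carrier_mat d d"
  shows "Re (mtrace (\<rho> * (complex_of_real a \<cdot>\<^sub>m A + complex_of_real b \<cdot>\<^sub>m B)))
     = a * Re (mtrace (\<rho> * A)) + b * Re (mtrace (\<rho> * B))"
proof -
  have "\<rho> * (complex_of_real a \<cdot>\<^sub>m A + complex_of_real b \<cdot>\<^sub>m B)
      = complex_of_real a \<cdot>\<^sub>m (\<rho> * A) + complex_of_real b \<cdot>\<^sub>m (\<rho> * B)"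
    using mult_add_distrib_mat[OF rc smult_carrier_mat[OF A] smult_carrier_mat[OF B]]
    by (simp add: mult_smult_distrib[OF rc A] mult_smult_distrib[OF rc B])
  moreover have "mtrace (complex_of_real a \<cdot>\<^sub>m (\<rho> * A) + complex_of_real b \<cdot>\<^sub>m (\<rho> * B))
     = complex_of_real a * mtrace (\<rho> * A) + complex_of_real b * mtrace (\<rho> * B)"
    using rc A B by (simp add: mtrace_add[of _ d] mtrace_smult[of _ d])
  ultimately show ?thesis by simp
qed

lemma density_exists: "density_mat (2 ^ m) (mat (2 ^ m) (2 ^ m) (\<lambda>(i,j). if i = 0 \<and> j = 0 then 1 else 0))"
  (is "density_mat ?d ?r")
proof -
  have d0: "0 < ?d" by simp
  have c: "?r \<in> carrier_mat ?d ?d" by simp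
  have mv: "?r *\<^sub>v x = vec ?d (\<lambda>i. if i = 0 then x $ 0 else 0)" if x: "x \<in> carrier_vec ?d" for x
  proof (rule eq_vecI)
    fix i assume i: "i < dim_vec (vec ?d (\<lambda>i. if i = 0 then x $ 0 else 0))"
    then have i': "i < ?d" by simp
    have "(?r *\<^sub>v x) $ i = (\<Sum>j<?d. (if i = 0 \<and> j = 0 then 1 else 0) * x $ j)"
      using i' x by (simp add: scalar_prod_def atLeast0LessThan)
    also have "\<dots> = (if i = 0 then x $ 0 else 0)"
      using d0 by (simp add: if_distrib[of "\<lambda>t. t * _"] sum.delta cong: if_cong)
    finally show "(?r *\<^sub>v x) $ i = vec ?d (\<lambda>i. if i = 0 then x $ 0 else 0) $ i" using i' by simp
  qed simp
  have q: "conjugate x \<bullet> (?r *\<^sub>v x) = cnj (x $ 0) * x $ 0" if x: "x \<in> carrier_vec ?d" for x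
  proof -
    have "conjugate x \<bullet> (?r *\<^sub>v x) = (\<Sum>i<?d. cnj (x $ i) * (if i = 0 then x $ 0 else 0))"
      unfolding mv[OF x] using x by (simp add: scalar_prod_def atLeast0LessThan)
    also have "\<dots> = cnj (x $ 0) * x $ 0"
      using d0 by (simp add: if_distrib[of "\<lambda>t. _ * t"] sum.delta cong: if_cong)
    finally show ?thesis .
  qed
  have "mtrace ?r = (\<Sum>i<?d. if i = 0 then 1 else 0)"
    by (simp add: mtrace_def)
  also have "\<dots> = 1" using d0 by simp
  finally have tr: "mtrace ?r = 1" .
  show ?thesis unfolding density_mat_def Let_def
    using c tr q by simp
qed

lemma Sup_unbdd: "\<not> bdd_above (X :: real set) \<Longrightarrow> Sup X = (LEAST z::real. False)"
proof -
  assume "\<not> bdd_above X"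
  then have "\<not> (\<forall>x\<in>X. x \<le> z)" for z unfolding bdd_above_def by blast
  then have "(\<lambda>z. \<forall>x\<in>X. x \<le> z) = (\<lambda>z. False)" by (intro ext) blast
  then show ?thesis unfolding Sup_real_def by simp
qed

lemma split_on_old:
  assumes "simple_graph n E" "i \<in> {1..n}" "j \<in> {1..n}"
  shows "split_vertex n E v i j = E i j"
  using assms unfolding split_vertex_def by auto

lemma realization_restrict:
  assumes G: "simple_graph n E" and R: "realization (Suc n) (split_vertex n E v) m S"
  shows "realization n E m S"
proof -
  have L: "\<forall>i\<in>{1..n}. length (S i) = m" using R unfolding realization_def by auto
  have C: "\<forall>i\<in>{1..n}. \<forall>j\<in>{1..n}.
        (E i j \<longrightarrow> pstring_mat (S i) * pstring_mat (S j) = - (pstring_mat (S j) * pstring_mat (S i))) \<and>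
        (\<not> E i j \<longrightarrow> pstring_mat (S i) * pstring_mat (S j) = pstring_mat (S j) * pstring_mat (S i))"
  proof (intro ballI)
    fix i j assume i: "i \<in> {1..n}" and j: "j \<in> {1..n}"
    have i': "i \<in> {1..Suc n}" and j': "j \<in> {1..Suc n}" using i j by auto
    have "split_vertex n E v i j = E i j" using split_on_old[OF G i j] .
    then show "(E i j \<longrightarrow> pstring_mat (S i) * pstring_mat (S j) = - (pstring_mat (S j) * pstring_mat (S i))) \<and>
        (\<not> E i j \<longrightarrow> pstring_mat (S i) * pstring_mat (S j) = pstring_mat (S j) * pstring_mat (S i))"
      using R i' j' unfolding realization_def by metis
  qed
  show ?thesis unfolding realization_def using L C by blast
qed

definition aset :: "nat \<Rightarrow> (nat \<Rightarrow> nat \<Rightarrow> bool) \<Rightarrow> (nat \<Rightarrow> real) \<Rightarrow> real set" where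
  "aset n E w = {(\<Sum>i\<in>I. w i) | I. independent_set n E I}"

lemma aset_finite: "finite (aset n E w)"
proof -
  have "aset n E w \<subseteq> (\<lambda>I. \<Sum>i\<in>I. w i) ` Pow {1..n}"
    unfolding aset_def independent_set_def by auto
  then show ?thesis by (rule finite_subset) simp
qed

lemma aset_ne: "aset n E w \<noteq> {}"
proof -
  have "independent_set n E {}" unfolding independent_set_def by simp
  then show ?thesis unfolding aset_def by blast
qed

lemma alpha_aset: "alpha n E w = Max (aset n E w)"
  unfolding alpha_def aset_def ..

lemma alpha_ge: "independent_set n E I \<Longrightarrow> (\<Sum>i\<in>I. w i) \<le> alpha n E w"
  unfolding alpha_aset using aset_finite by (intro Max_ge) (auto simp: aset_def)

lemma alpha_attained: "\<exists>I. independent_set n E I \<and> alpha n E w = (\<Sum>i\<in>I. w i)"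
proof -
  have "alpha n E w \<in> aset n E w" unfolding alpha_aset using aset_finite aset_ne by (rule Max_in)
  then show ?thesis unfolding aset_def by auto
qed

lemma alpha_scale: "alpha n E (\<lambda>i. 2 * w i) = 2 * alpha n E w"
proof -
  have "aset n E (\<lambda>i. 2 * w i) = (\<lambda>x. 2 * x) ` aset n E w"
  proof (intro equalityI subsetI)
    fix x assume "x \<in> aset n E (\<lambda>i. 2 * w i)"
    then obtain I where "independent_set n E I" "x = (\<Sum>i\<in>I. 2 * w i)" unfolding aset_def by auto
    then have "x = 2 * (\<Sum>i\<in>I. w i)" "(\<Sum>i\<in>I. w i) \<in> aset n E w"
      unfolding aset_def by (auto simp: sum_distrib_left)
    then show "x \<in> (\<lambda>x. 2 * x) ` aset n E w" by blast
  next
    fix x assume "x \<in> (\<lambda>x. 2 * x) ` aset n E w"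
    then obtain I where "independent_set n E I" "x = 2 * (\<Sum>i\<in>I. w i)" unfolding aset_def by auto
    then show "x \<in> aset n E (\<lambda>i. 2 * w i)" unfolding aset_def by (auto simp: sum_distrib_left)
  qed
  moreover have "mono (\<lambda>x::real. 2 * x)" by (rule monoI) simp
  ultimately show ?thesis unfolding alpha_aset
    using mono_Max_commute[of "\<lambda>x::real. 2 * x", OF _ aset_finite aset_ne] by simp
qed

lemma alpha_single: assumes "simple_graph n E" "i \<in> {1..n}" shows "w i \<le> alpha n E w"
proof -
  have "independent_set n E {i}" using assms unfolding independent_set_def simple_graph_def by auto
  from alpha_ge[OF this, of w] show ?thesis by simp
qed

lemma alpha_split:
  assumes G: "simple_graph n E" and v: "v \<in> {1..n}"
  shows "alpha n E (w(v := max (w v) (w (Suc n)))) = alpha (Suc n) (split_vertex n E v) w"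
    (is "alpha n E ?w' = alpha (Suc n) ?E' w")
proof (rule antisym)
  have sym: "E i j \<Longrightarrow> E j i" for i j using G unfolding simple_graph_def by blast
  have irr: "\<not> E i i" for i using G unfolding simple_graph_def by blast
  have inr: "E i j \<Longrightarrow> i \<in> {1..n} \<and> j \<in> {1..n}" for i j using G unfolding simple_graph_def by blast
  have noSn: "\<not> E x (Suc n)" "\<not> E (Suc n) x" for x using inr by force+
  obtain J where J: "independent_set n E J" and aJ: "alpha n E ?w' = (\<Sum>i\<in>J. ?w' i)"
    using alpha_attained by blast
  have Jsub: "J \<subseteq> {1..n}" and Jind: "\<forall>i\<in>J. \<forall>j\<in>J. \<not> E i j" using J unfolding independent_set_def by auto
  have finJ: "finite J" using Jsub finite_subset by blast
  have JG': "independent_set (Suc n) ?E' J"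
    unfolding independent_set_def using Jsub Jind split_on_old[OF G] by (auto simp: subset_iff)
  show "alpha n E ?w' \<le> alpha (Suc n) ?E' w"
  proof (cases "v \<in> J \<and> w v < w (Suc n)")
    case False
    then have "(\<Sum>i\<in>J. ?w' i) = (\<Sum>i\<in>J. w i)" by (intro sum.cong) auto
    then show ?thesis using aJ alpha_ge[OF JG', of w] by simp
  next
    case True
    define I where "I = insert (Suc n) (J - {v})"
    have "Suc n \<notin> J" using Jsub by auto
    have I: "independent_set (Suc n) ?E' I"
      unfolding independent_set_def I_def
    proof (intro conjI ballI)
      show "insert (Suc n) (J - {v}) \<subseteq> {1..Suc n}" using Jsub by auto
      fix i j assume i: "i \<in> insert (Suc n) (J - {v})" and j: "j \<in> insert (Suc n) (J - {v})"
      show "\<not> ?E' i j"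
        using i j Jsub Jind True v irr noSn unfolding split_vertex_def by (auto dest: sym)
    qed
    have "(\<Sum>i\<in>I. w i) = w (Suc n) + (\<Sum>i\<in>J - {v}. w i)"
      unfolding I_def using finJ \<open>Suc n \<notin> J\<close> by (simp add: sum.insert)
    also have "(\<Sum>i\<in>J - {v}. w i) = (\<Sum>i\<in>J - {v}. ?w' i)" by (intro sum.cong) auto
    also have "w (Suc n) + \<dots> = (\<Sum>i\<in>J. ?w' i)"
      using True finJ sum.remove[OF finJ, of v ?w'] by simp
    finally show ?thesis using aJ alpha_ge[OF I, of w] by simp
  qed
next
  have sym: "E i j \<Longrightarrow> E j i" for i j using G unfolding simple_graph_def by blast
  have irr: "\<not> E i i" for i using G unfolding simple_graph_def by blast
  have inr: "E i j \<Longrightarrow> i \<in> {1..n} \<and> j \<in> {1..n}" for i j using G unfolding simple_graph_def by blast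
  obtain I where I: "independent_set (Suc n) ?E' I" and aI: "alpha (Suc n) ?E' w = (\<Sum>i\<in>I. w i)"
    using alpha_attained by blast
  have Isub: "I \<subseteq> {1..Suc n}" and Iind: "\<forall>i\<in>I. \<forall>j\<in>I. \<not> ?E' i j" using I unfolding independent_set_def by auto
  have finI: "finite I" using Isub finite_subset by blast
  have ge: "w i \<le> ?w' i" for i by simp
  show "alpha (Suc n) ?E' w \<le> alpha n E ?w'"
  proof (cases "Suc n \<in> I")
    case False
    then have "I \<subseteq> {1..n}" using Isub by (auto simp: subset_iff le_Suc_eq)
    then have IG: "independent_set n E I" unfolding independent_set_def
      using Iind split_on_old[OF G] by (auto simp: subset_iff)
    have "(\<Sum>i\<in>I. w i) \<le> (\<Sum>i\<in>I. ?w' i)" by (rule sum_mono) (rule ge)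
    then show ?thesis using aI alpha_ge[OF IG, of ?w'] by simp
  next
    case True
    have vI: "v \<notin> I" using Iind True unfolding split_vertex_def by auto
    define J where "J = insert v (I - {Suc n})"
    have Jsub: "I - {Suc n} \<subseteq> {1..n}" using Isub by (auto simp: subset_iff le_Suc_eq)
    have J: "independent_set n E J"
      unfolding independent_set_def J_def
    proof (intro conjI ballI)
      show "insert v (I - {Suc n}) \<subseteq> {1..n}" using Jsub v by auto
      fix i j assume i: "i \<in> insert v (I - {Suc n})" and j: "j \<in> insert v (I - {Suc n})"
      have nb: "\<not> E v x" if "x \<in> I - {Suc n}" for x
        using Iind True that unfolding split_vertex_def by auto
      have old: "\<not> E x y" if "x \<in> I - {Suc n}" "y \<in> I - {Suc n}" for x y
      proof -
        have "x \<in> {1..n}" "y \<in> {1..n}" using that Jsub by auto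
        then show ?thesis using Iind that split_on_old[OF G, of x y v] by auto
      qed
      show "\<not> E i j" using i j nb old irr by (auto dest: sym)
    qed
    have "(\<Sum>i\<in>I. w i) = w (Suc n) + (\<Sum>i\<in>I - {Suc n}. w i)"
      using sum.remove[OF finI True, of w] by simp
    also have "(\<Sum>i\<in>I - {Suc n}. w i) = (\<Sum>i\<in>I - {Suc n}. ?w' i)" using vI by (intro sum.cong) auto
    also have "w (Suc n) + \<dots> \<le> ?w' v + \<dots>" by simp
    also have "\<dots> = (\<Sum>i\<in>J. ?w' i)"
      unfolding J_def using finI vI by (simp add: sum.insert)
    finally show ?thesis using aI alpha_ge[OF J, of ?w'] by simp
  qed
qed

lemma rot_apply:
  fixes A B :: "complex mat" and a b :: real
  assumes A: "A \<in> carrier_mat d d" and B: "B \<in> carrier_mat d d"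
    and hA: "adj A = A" and hB: "adj B = B"
    and AA: "A * A = 1\<^sub>m d" and BB: "B * B = 1\<^sub>m d" and AB: "A * B = - (B * A)"
    and rho: "density_mat d \<rho>" and ab: "a\<^sup>2 + b\<^sup>2 = 1"
  shows "\<exists>\<rho>'. density_mat d \<rho>' \<and>
     Re (mtrace (\<rho>' * A)) = a * Re (mtrace (\<rho> * A)) + b * Re (mtrace (\<rho> * B)) \<and>
     (\<forall>X. X \<in> carrier_mat d d \<longrightarrow> X * (A * B) = (A * B) * X \<longrightarrow> mtrace (\<rho>' * X) = mtrace (\<rho> * X))"
proof -
  obtain t where at: "a = cos t" and bt: "b = sin t" using sincos_total_2pi[OF ab] by blast
  define c where "c = complex_of_real (cos (t / 2))"
  define s where "s = complex_of_real (sin (t / 2))"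
  have cs: "c * c + s * s = 1" unfolding c_def s_def
    by (simp only: of_real_mult[symmetric] of_real_add[symmetric] sin_cos_squared_add3) simp
  have cc: "cnj c = c" and sc: "cnj s = s" unfolding c_def s_def by simp_all
  have t2: "t = 2 * (t / 2)" by simp
  have ca: "c * c - s * s = complex_of_real a"
  proof -
    have "a = (cos (t/2))\<^sup>2 - (sin (t/2))\<^sup>2" unfolding at by (subst t2) (rule cos_double)
    then show ?thesis unfolding c_def s_def by (simp add: power2_eq_square)
  qed
  have sb: "2 * c * s = complex_of_real b"
  proof -
    have "b = 2 * sin (t/2) * cos (t/2)" unfolding bt by (subst t2) (rule sin_double)
    then show ?thesis unfolding c_def s_def by (simp add: mult.commute mult.left_commute)
  qed
  define U where "U = c \<cdot>\<^sub>m 1\<^sub>m d + s \<cdot>\<^sub>m (A * B)"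
  note rot = rotation[OF A B hA hB AA BB AB cs cc sc, folded U_def]
  have Uc: "U \<in> carrier_mat d d" by (rule rot(1))
  have rc: "\<rho> \<in> carrier_mat d d" using rho by (simp add: density_mat_def)
  define \<rho>' where "\<rho>' = U * \<rho> * adj U"
  have dens: "density_mat d \<rho>'" unfolding \<rho>'_def by (rule density_conj[OF rho Uc rot(2)])
  have "mtrace (\<rho>' * A) = mtrace (\<rho> * (adj U * A * U))"
    unfolding \<rho>'_def by (rule trace_conj[OF rc Uc A])
  also have "adj U * A * U = complex_of_real a \<cdot>\<^sub>m A + complex_of_real b \<cdot>\<^sub>m B"
    using rot(3) ca sb by simp
  finally have trA: "Re (mtrace (\<rho>' * A)) = a * Re (mtrace (\<rho> * A)) + b * Re (mtrace (\<rho> * B))"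
    using trace_lin[OF rc A B, of a b] by simp
  have trX: "mtrace (\<rho>' * X) = mtrace (\<rho> * X)"
    if X: "X \<in> carrier_mat d d" and XQ: "X * (A * B) = (A * B) * X" for X
  proof -
    have "mtrace (\<rho>' * X) = mtrace (\<rho> * (adj U * X * U))"
      unfolding \<rho>'_def by (rule trace_conj[OF rc Uc X])
    also have "adj U * X * U = X" using rot(4)[OF X XQ] .
    finally show ?thesis .
  qed
  show ?thesis using dens trA trX by blast
qed

lemma comm_prod:
  fixes X A B :: "complex mat"
  assumes X: "X \<in> carrier_mat d d" and A: "A \<in> carrier_mat d d" and B: "B \<in> carrier_mat d d"
    and h: "(X * A = A * X \<and> X * B = B * X) \<or> (X * A = - (A * X) \<and> X * B = - (B * X))"
  shows "X * (A * B) = (A * B) * X"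
  using h
proof
  assume h1: "X * A = A * X \<and> X * B = B * X"
  have "X * (A * B) = (X * A) * B" using assoc_mult_mat[OF X A B] by simp
  also have "\<dots> = A * (X * B)" using h1 assoc_mult_mat[OF A X B] by simp
  also have "\<dots> = (A * B) * X" using h1 assoc_mult_mat[OF A B X] by simp
  finally show ?thesis .
next
  assume h1: "X * A = - (A * X) \<and> X * B = - (B * X)"
  have "X * (A * B) = (X * A) * B" using assoc_mult_mat[OF X A B] by simp
  also have "\<dots> = - (A * X * B)" using h1 uminus_mult_l[OF mult_carrier_mat[OF A X] B] by simp
  also have "A * X * B = A * (X * B)" using assoc_mult_mat[OF A X B] .
  also have "\<dots> = - (A * (B * X))" using h1 uminus_mult_r[OF A mult_carrier_mat[OF B X]] by simp
  finally show ?thesis using assoc_mult_mat[OF A B X] by simp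
qed

definition valf :: "nat \<Rightarrow> (nat \<Rightarrow> pauli list) \<Rightarrow> (nat \<Rightarrow> real) \<Rightarrow> complex mat \<Rightarrow> real" where
  "valf N S w \<rho> = (\<Sum>i\<in>{1..N}. w i * (Re (mtrace (\<rho> * pstring_mat (S i))))\<^sup>2)"

lemma beta_valf: "beta_real N m S w = Sup {valf N S w \<rho> | \<rho>. density_mat (2 ^ m) \<rho>}"
  unfolding beta_real_def valf_def ..

lemma split_facts:
  assumes G: "simple_graph n E" and v: "v \<in> {1..n}"
    and R: "realization (Suc n) (split_vertex n E v) m S"
  shows "\<And>i. i \<in> {1..Suc n} \<Longrightarrow> pstring_mat (S i) \<in> carrier_mat (2^m) (2^m)"
    and "\<And>i. adj (pstring_mat (S i)) = pstring_mat (S i)"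
    and "\<And>i. i \<in> {1..Suc n} \<Longrightarrow> pstring_mat (S i) * pstring_mat (S i) = 1\<^sub>m (2^m)"
    and "pstring_mat (S v) * pstring_mat (S (Suc n)) = - (pstring_mat (S (Suc n)) * pstring_mat (S v))"
    and "\<And>u. u \<in> {1..n} \<Longrightarrow> u \<noteq> v \<Longrightarrow>
      (pstring_mat (S u) * pstring_mat (S v) = pstring_mat (S v) * pstring_mat (S u) \<and>
       pstring_mat (S u) * pstring_mat (S (Suc n)) = pstring_mat (S (Suc n)) * pstring_mat (S u)) \<or>
      (pstring_mat (S u) * pstring_mat (S v) = - (pstring_mat (S v) * pstring_mat (S u)) \<and>
       pstring_mat (S u) * pstring_mat (S (Suc n)) = - (pstring_mat (S (Suc n)) * pstring_mat (S u)))"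
proof -
  fix i assume i: "i \<in> {1..Suc n}"
  then have "length (S i) = m" using R unfolding realization_def by auto
  then show "pstring_mat (S i) \<in> carrier_mat (2^m) (2^m)" using pstring_carrier'[of "S i"] by simp
next
  fix i show "adj (pstring_mat (S i)) = pstring_mat (S i)" by (rule pstring_adj)
next
  fix i assume i: "i \<in> {1..Suc n}"
  then have "length (S i) = m" using R unfolding realization_def by auto
  then show "pstring_mat (S i) * pstring_mat (S i) = 1\<^sub>m (2^m)" using pstring_sq[of "S i"] by simp
next
  have "split_vertex n E v v (Suc n)" unfolding split_vertex_def by simp
  moreover have "v \<in> {1..Suc n}" "Suc n \<in> {1..Suc n}" using v by auto
  ultimately show "pstring_mat (S v) * pstring_mat (S (Suc n)) = - (pstring_mat (S (Suc n)) * pstring_mat (S v))"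
    using R unfolding realization_def by blast
next
  fix u assume u: "u \<in> {1..n}" and uv: "u \<noteq> v"
  have sym: "E i j \<Longrightarrow> E j i" for i j using G unfolding simple_graph_def by blast
  have inr: "E i j \<Longrightarrow> i \<in> {1..n} \<and> j \<in> {1..n}" for i j using G unfolding simple_graph_def by blast
  have noSn: "\<not> E x (Suc n)" "\<not> E (Suc n) x" for x using inr by force+
  have e1: "split_vertex n E v u v = E u v" using split_on_old[OF G u v] .
  have e2: "split_vertex n E v u (Suc n) = E u v"
    unfolding split_vertex_def using uv u noSn by (auto dest: sym)
  have m: "u \<in> {1..Suc n}" "v \<in> {1..Suc n}" "Suc n \<in> {1..Suc n}" using u v by auto
  show "(pstring_mat (S u) * pstring_mat (S v) = pstring_mat (S v) * pstring_mat (S u) \<and>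
       pstring_mat (S u) * pstring_mat (S (Suc n)) = pstring_mat (S (Suc n)) * pstring_mat (S u)) \<or>
      (pstring_mat (S u) * pstring_mat (S v) = - (pstring_mat (S v) * pstring_mat (S u)) \<and>
       pstring_mat (S u) * pstring_mat (S (Suc n)) = - (pstring_mat (S (Suc n)) * pstring_mat (S u)))"
  proof (cases "E u v")
    case True
    then show ?thesis using R m e1 e2 unfolding realization_def by metis
  next
    case False
    then show ?thesis using R m e1 e2 unfolding realization_def by metis
  qed
qed

lemma sum_split_sv:
  fixes F :: "nat \<Rightarrow> real"
  assumes v: "v \<in> {1..n}"
  shows "(\<Sum>i\<in>{1..Suc n}. F i) = F v + F (Suc n) + (\<Sum>i\<in>{1..n} - {v}. F i)"
proof -
  have "{1..Suc n} = insert (Suc n) {1..n}" by auto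
  then have "(\<Sum>i\<in>{1..Suc n}. F i) = F (Suc n) + (\<Sum>i\<in>{1..n}. F i)" by simp
  also have "(\<Sum>i\<in>{1..n}. F i) = F v + (\<Sum>i\<in>{1..n} - {v}. F i)"
    using sum.remove[of "{1..n}" v F] v by simp
  finally show ?thesis by simp
qed

lemma sum_split_v:
  fixes F :: "nat \<Rightarrow> real" and n :: nat
  assumes v: "v \<in> {1..n}"
  shows "(\<Sum>i\<in>{1..n}. F i) = F v + (\<Sum>i\<in>{1..n} - {v}. F i)"
  using sum.remove[of "{1..n}" v F] v by simp

lemma claim_up:
  assumes G: "simple_graph n E" and v: "v \<in> {1..n}"
    and R: "realization (Suc n) (split_vertex n E v) m S"
    and W: "\<forall>i\<in>{1..Suc n}. 0 \<le> w i"
    and rho: "density_mat (2^m) \<rho>"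
  shows "\<exists>\<rho>'. density_mat (2^m) \<rho>' \<and> valf (Suc n) S w \<rho> \<le> valf n S (w(v := max (w v) (w (Suc n)))) \<rho>'"
proof -
  note F = split_facts[OF G v R]
  define P where "P i = pstring_mat (S i)" for i
  define x where "x i = Re (mtrace (\<rho> * P i))" for i
  have vS: "v \<in> {1..Suc n}" and SS: "Suc n \<in> {1..Suc n}" using v by auto
  define r where "r = sqrt ((x v)\<^sup>2 + (x (Suc n))\<^sup>2)"
  define a where "a = (if r = 0 then 1 else x v / r)"
  define b where "b = (if r = 0 then 0 else x (Suc n) / r)"
  have r2: "r\<^sup>2 = (x v)\<^sup>2 + (x (Suc n))\<^sup>2" unfolding r_def by simp
  have ab: "a\<^sup>2 + b\<^sup>2 = 1"
  proof (cases "r = 0")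
    case True then show ?thesis unfolding a_def b_def by simp
  next
    case False
    then have "a\<^sup>2 + b\<^sup>2 = ((x v)\<^sup>2 + (x (Suc n))\<^sup>2) / r\<^sup>2" unfolding a_def b_def
      by (simp add: power_divide add_divide_distrib)
    also have "\<dots> = r\<^sup>2 / r\<^sup>2" by (simp only: r2)
    finally show ?thesis using False by simp
  qed
  have abr: "a * x v + b * x (Suc n) = r"
  proof (cases "r = 0")
    case True
    then have "(x v)\<^sup>2 + (x (Suc n))\<^sup>2 = 0" using r2 by simp
    then have "x v = 0" by (simp add: sum_power2_eq_zero_iff)
    then show ?thesis unfolding a_def b_def using True by simp
  next
    case False
    then have "a * x v + b * x (Suc n) = ((x v)\<^sup>2 + (x (Suc n))\<^sup>2) / r" unfolding a_def b_def
      by (simp add: power2_eq_square add_divide_distrib)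
    also have "\<dots> = r\<^sup>2 / r" by (simp only: r2)
    finally show ?thesis using False by (simp add: power2_eq_square)
  qed
  obtain \<rho>' where dens: "density_mat (2^m) \<rho>'"
    and trv: "Re (mtrace (\<rho>' * P v)) = a * x v + b * x (Suc n)"
    and trX: "\<forall>X. X \<in> carrier_mat (2^m) (2^m) \<longrightarrow> X * (P v * P (Suc n)) = (P v * P (Suc n)) * X
        \<longrightarrow> mtrace (\<rho>' * X) = mtrace (\<rho> * X)"
    using rot_apply[OF F(1)[OF vS] F(1)[OF SS] F(2) F(2) F(3)[OF vS] F(3)[OF SS] F(4) rho ab]
    unfolding P_def x_def by blast
  have y: "Re (mtrace (\<rho>' * P u)) = x u" if u: "u \<in> {1..n}" "u \<noteq> v" for u
  proof -
    have uS: "u \<in> {1..Suc n}" using u by auto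
    have "P u * (P v * P (Suc n)) = (P v * P (Suc n)) * P u"
      using comm_prod[OF F(1)[OF uS] F(1)[OF vS] F(1)[OF SS] F(5)[OF u]] unfolding P_def .
    then show ?thesis using trX F(1)[OF uS] unfolding x_def P_def by simp
  qed
  let ?w' = "w(v := max (w v) (w (Suc n)))"
  have yv: "(Re (mtrace (\<rho>' * P v)))\<^sup>2 = (x v)\<^sup>2 + (x (Suc n))\<^sup>2" using trv abr r2 by simp
  have "valf (Suc n) S w \<rho> = w v * (x v)\<^sup>2 + w (Suc n) * (x (Suc n))\<^sup>2 + (\<Sum>i\<in>{1..n} - {v}. w i * (x i)\<^sup>2)"
    unfolding valf_def x_def P_def by (rule sum_split_sv[OF v])
  also have "(\<Sum>i\<in>{1..n} - {v}. w i * (x i)\<^sup>2) = (\<Sum>i\<in>{1..n} - {v}. ?w' i * (Re (mtrace (\<rho>' * P i)))\<^sup>2)"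
    using y by (intro sum.cong) auto
  also have "w v * (x v)\<^sup>2 + w (Suc n) * (x (Suc n))\<^sup>2 \<le> ?w' v * (Re (mtrace (\<rho>' * P v)))\<^sup>2"
  proof -
    have "w v * (x v)\<^sup>2 \<le> max (w v) (w (Suc n)) * (x v)\<^sup>2" by (intro mult_right_mono) auto
    moreover have "w (Suc n) * (x (Suc n))\<^sup>2 \<le> max (w v) (w (Suc n)) * (x (Suc n))\<^sup>2" by (intro mult_right_mono) auto
    ultimately show ?thesis using yv by (simp add: distrib_left)
  qed
  then have "w v * (x v)\<^sup>2 + w (Suc n) * (x (Suc n))\<^sup>2 + (\<Sum>i\<in>{1..n} - {v}. ?w' i * (Re (mtrace (\<rho>' * P i)))\<^sup>2)
      \<le> ?w' v * (Re (mtrace (\<rho>' * P v)))\<^sup>2 + (\<Sum>i\<in>{1..n} - {v}. ?w' i * (Re (mtrace (\<rho>' * P i)))\<^sup>2)"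
    by simp
  also have "\<dots> = valf n S ?w' \<rho>'"
    unfolding valf_def P_def by (rule sum_split_v[OF v, symmetric])
  finally show ?thesis using dens by blast
qed

lemma claim_down:
  assumes G: "simple_graph n E" and v: "v \<in> {1..n}"
    and R: "realization (Suc n) (split_vertex n E v) m S"
    and W: "\<forall>i\<in>{1..Suc n}. 0 \<le> w i"
    and rho: "density_mat (2^m) \<rho>"
  shows "\<exists>\<rho>'. density_mat (2^m) \<rho>' \<and> valf n S (w(v := max (w v) (w (Suc n)))) \<rho> \<le> valf (Suc n) S w \<rho>'"
proof -
  note F = split_facts[OF G v R]
  define P where "P i = pstring_mat (S i)" for i
  define x where "x i = Re (mtrace (\<rho> * P i))" for i
  have vS: "v \<in> {1..Suc n}" and SS: "Suc n \<in> {1..Suc n}" using v by auto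
  let ?w' = "w(v := max (w v) (w (Suc n)))"
  have lhs: "valf n S ?w' \<rho> = max (w v) (w (Suc n)) * (x v)\<^sup>2 + (\<Sum>i\<in>{1..n} - {v}. w i * (x i)\<^sup>2)"
  proof -
    have "valf n S ?w' \<rho> = ?w' v * (x v)\<^sup>2 + (\<Sum>i\<in>{1..n} - {v}. ?w' i * (x i)\<^sup>2)"
      unfolding valf_def x_def P_def by (rule sum_split_v[OF v])
    also have "(\<Sum>i\<in>{1..n} - {v}. ?w' i * (x i)\<^sup>2) = (\<Sum>i\<in>{1..n} - {v}. w i * (x i)\<^sup>2)"
      by (intro sum.cong) auto
    finally show ?thesis by (simp only: fun_upd_same)
  qed
  show ?thesis
  proof (cases "w (Suc n) \<le> w v")
    case True
    have "valf (Suc n) S w \<rho> = w v * (x v)\<^sup>2 + w (Suc n) * (x (Suc n))\<^sup>2 + (\<Sum>i\<in>{1..n} - {v}. w i * (x i)\<^sup>2)"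
      unfolding valf_def x_def P_def by (rule sum_split_sv[OF v])
    moreover have "0 \<le> w (Suc n) * (x (Suc n))\<^sup>2" using W SS by simp
    ultimately have "valf n S ?w' \<rho> \<le> valf (Suc n) S w \<rho>" using lhs True by simp
    then show ?thesis using rho by blast
  next
    case False
    have AB: "P (Suc n) * P v = - (P v * P (Suc n))" using F(4) unfolding P_def by simp
    have ab: "(0::real)\<^sup>2 + 1\<^sup>2 = 1" by simp
    obtain \<rho>' where dens: "density_mat (2^m) \<rho>'"
      and trv: "Re (mtrace (\<rho>' * P (Suc n))) = 0 * x (Suc n) + 1 * x v"
      and trX: "\<forall>X. X \<in> carrier_mat (2^m) (2^m) \<longrightarrow> X * (P (Suc n) * P v) = (P (Suc n) * P v) * X
          \<longrightarrow> mtrace (\<rho>' * X) = mtrace (\<rho> * X)"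
      using rot_apply[OF F(1)[OF SS] F(1)[OF vS] F(2) F(2) F(3)[OF SS] F(3)[OF vS] AB[unfolded P_def] rho ab]
      unfolding P_def x_def by blast
    have y: "Re (mtrace (\<rho>' * P u)) = x u" if u: "u \<in> {1..n}" "u \<noteq> v" for u
    proof -
      have uS: "u \<in> {1..Suc n}" using u by auto
      have h: "(P u * P (Suc n) = P (Suc n) * P u \<and> P u * P v = P v * P u) \<or>
               (P u * P (Suc n) = - (P (Suc n) * P u) \<and> P u * P v = - (P v * P u))"
        using F(5)[OF u] unfolding P_def by blast
      have "P u * (P (Suc n) * P v) = (P (Suc n) * P v) * P u"
        using comm_prod[OF F(1)[OF uS, folded P_def] F(1)[OF SS, folded P_def] F(1)[OF vS, folded P_def] h] .
      then show ?thesis using trX F(1)[OF uS] unfolding x_def P_def by simp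
    qed
    have "valf (Suc n) S w \<rho>' = w v * (Re (mtrace (\<rho>' * P v)))\<^sup>2 + w (Suc n) * (Re (mtrace (\<rho>' * P (Suc n))))\<^sup>2
        + (\<Sum>i\<in>{1..n} - {v}. w i * (Re (mtrace (\<rho>' * P i)))\<^sup>2)"
      unfolding valf_def P_def by (rule sum_split_sv[OF v])
    also have "(\<Sum>i\<in>{1..n} - {v}. w i * (Re (mtrace (\<rho>' * P i)))\<^sup>2) = (\<Sum>i\<in>{1..n} - {v}. w i * (x i)\<^sup>2)"
      using y by (intro sum.cong) auto
    finally have "valf (Suc n) S w \<rho>' = w v * (Re (mtrace (\<rho>' * P v)))\<^sup>2 + w (Suc n) * (x v)\<^sup>2
        + (\<Sum>i\<in>{1..n} - {v}. w i * (x i)\<^sup>2)" using trv by simp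
    moreover have "0 \<le> w v * (Re (mtrace (\<rho>' * P v)))\<^sup>2" using W vS by simp
    ultimately have "valf n S ?w' \<rho> \<le> valf (Suc n) S w \<rho>'" using lhs False by simp
    then show ?thesis using dens by blast
  qed
qed

theorem mainTheorem8:
  fixes n v :: nat and E :: "nat \<Rightarrow> nat \<Rightarrow> bool"
  assumes "simple_graph n E"
    and "v \<in> {1..n}"
    and "hbar_perfect n E"
  shows "hbar_perfect (Suc n) (split_vertex n E v)"
proof -
  have G: "simple_graph n E" and v: "v \<in> {1..n}" and H: "hbar_perfect n E" using assms by auto
  show ?thesis unfolding hbar_perfect_def
  proof (intro allI impI)
    fix m :: nat and S :: "nat \<Rightarrow> pauli list" and w :: "nat \<Rightarrow> real"
    assume R: "realization (Suc n) (split_vertex n E v) m S" and W: "\<forall>i\<in>{1..Suc n}. 0 \<le> w i"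
    define w' where "w' = w(v := max (w v) (w (Suc n)))"
    have W': "\<forall>i\<in>{1..n}. 0 \<le> w' i"
    proof
      fix i assume i: "i \<in> {1..n}"
      then have "0 \<le> w i" using W by auto
      have "0 \<le> w v" using W v by auto
      moreover have "w v \<le> max (w v) (w (Suc n))" by (rule max.cobounded1)
      ultimately show "0 \<le> w' i" unfolding w'_def using \<open>0 \<le> w i\<close> by auto
    qed
    have Rn: "realization n E m S" by (rule realization_restrict[OF G R])
    have Hb: "beta_real n m S w' = alpha n E w'" using H Rn W' unfolding hbar_perfect_def by blast
    have Al: "alpha n E w' = alpha (Suc n) (split_vertex n E v) w"
      unfolding w'_def by (rule alpha_split[OF G v])
    define SF where "SF = {valf (Suc n) S w \<rho> | \<rho>. density_mat (2^m) \<rho>}"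
    define SG where "SG = {valf n S w' \<rho> | \<rho>. density_mat (2^m) \<rho>}"
    obtain \<rho>0 where \<rho>0: "density_mat (2^m) \<rho>0" using density_exists by blast
    have neF: "SF \<noteq> {}" unfolding SF_def using \<rho>0 by blast
    have neG: "SG \<noteq> {}" unfolding SG_def using \<rho>0 by blast
    have bddG: "bdd_above SG"
    proof (rule ccontr)
      assume nb: "\<not> bdd_above SG"
      define w2 where "w2 = (\<lambda>i. 2 * w' i)"
      define SG2 where "SG2 = {valf n S w2 \<rho> | \<rho>. density_mat (2^m) \<rho>}"
      have v2: "valf n S w2 \<rho> = 2 * valf n S w' \<rho>" for \<rho>
        unfolding valf_def w2_def by (simp add: sum_distrib_left mult.assoc)
      have nb2: "\<not> bdd_above SG2"
      proof
        assume "bdd_above SG2"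
        then obtain M where M: "\<And>y. y \<in> SG2 \<Longrightarrow> y \<le> M" unfolding bdd_above_def by blast
        have "y \<le> M / 2" if y: "y \<in> SG" for y
        proof -
          obtain \<rho> where "density_mat (2^m) \<rho>" "y = valf n S w' \<rho>" using y unfolding SG_def by blast
          then have "2 * y \<in> SG2" unfolding SG2_def using v2 by auto
          then show ?thesis using M by force
        qed
        then show False using nb unfolding bdd_above_def by blast
      qed
      have W2: "\<forall>i\<in>{1..n}. 0 \<le> w2 i" using W' unfolding w2_def by auto
      have Hb2: "beta_real n m S w2 = alpha n E w2" using H Rn W2 unfolding hbar_perfect_def by blast
      have "alpha n E w2 = 2 * alpha n E w'" unfolding w2_def by (rule alpha_scale)
      moreover have "beta_real n m S w2 = beta_real n m S w'"
        unfolding beta_valf using Sup_unbdd[OF nb] Sup_unbdd[OF nb2] unfolding SG_def SG2_def by simp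
      ultimately have a0: "alpha n E w' = 0" using Hb Hb2 by simp
      have z: "w' i = 0" if i: "i \<in> {1..n}" for i
        using alpha_single[OF G i, of w'] a0 W' i by force
      have "y \<le> 0" if y: "y \<in> SG" for y
      proof -
        obtain \<rho> where "y = valf n S w' \<rho>" using y unfolding SG_def by blast
        then have "y = 0" unfolding valf_def using z by simp
        then show ?thesis by simp
      qed
      then show False using nb unfolding bdd_above_def by blast
    qed
    have upF: "y \<le> Sup SG" if y: "y \<in> SF" for y
    proof -
      obtain \<rho> where rho: "density_mat (2^m) \<rho>" and yv: "y = valf (Suc n) S w \<rho>" using y unfolding SF_def by blast
      obtain \<rho>' where d': "density_mat (2^m) \<rho>'" and le: "valf (Suc n) S w \<rho> \<le> valf n S w' \<rho>'"
        using claim_up[OF G v R W rho] unfolding w'_def by blast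
      have "valf n S w' \<rho>' \<in> SG" unfolding SG_def using d' by blast
      then have "valf n S w' \<rho>' \<le> Sup SG" by (rule cSup_upper[OF _ bddG])
      then show ?thesis using le yv by simp
    qed
    have bddF: "bdd_above SF" unfolding bdd_above_def using upF by blast
    have le1: "Sup SF \<le> Sup SG" using upF by (intro cSup_least[OF neF]) blast
    have upG: "y \<le> Sup SF" if y: "y \<in> SG" for y
    proof -
      obtain \<rho> where rho: "density_mat (2^m) \<rho>" and yv: "y = valf n S w' \<rho>" using y unfolding SG_def by blast
      obtain \<rho>' where d': "density_mat (2^m) \<rho>'" and le: "valf n S w' \<rho> \<le> valf (Suc n) S w \<rho>'"
        using claim_down[OF G v R W rho] unfolding w'_def by blast
      have "valf (Suc n) S w \<rho>' \<in> SF" unfolding SF_def using d' by blast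
      then have "valf (Suc n) S w \<rho>' \<le> Sup SF" by (rule cSup_upper[OF _ bddF])
      then show ?thesis using le yv by simp
    qed
    have le2: "Sup SG \<le> Sup SF" using upG by (intro cSup_least[OF neG]) blast
    have "beta_real (Suc n) m S w = Sup SF" unfolding beta_valf SF_def ..
    also have "\<dots> = Sup SG" using le1 le2 by simp
    also have "\<dots> = beta_real n m S w'" unfolding beta_valf SG_def ..
    finally show "beta_real (Suc n) m S w = alpha (Suc n) (split_vertex n E v) w" using Hb Al by simp
  qed
qed

end
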